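(* Every topological space with the discrete countable chain condition (DCCC) is selectively $3$-star-ccc.
   Context: No separation axioms are assumed. A space has the DCCC if every discrete family of open sets is countable. For $B\subseteq X$ and a family $\mathcal{U}$ of subsets of $X$: $\operatorname{st}^1(B,\mathcal{U})=\bigcup\{U\in\mathcal{U}:U\cap B\neq\emptyset\}$ and $\operatorname{st}^{n+1}(B,\mathcal{U})=\bigcup\{U\in\mathcal{U}:U\cap\operatorname{st}^n(B,\mathcal{U})\neq\emptyset\}$. A space $X$ is selectively $3$-star-ccc if for every open cover $\mathcal{U}$ of $X$ and every sequence $(\mathcal{A}_n:n\in\omega)$ of maximal pairwise disjoint families of open subsets of $X$, there is a sequence $(A_n\in\mathcal{A}_n:n\in\omega)$ with $\operatorname{st}^3(\bigcup_{n\in\omega}A_n,\mathcal{U})=X$. *)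

theory Defs
  imports "HOL-Analysis.Analysis"
begin

definition discrete_family :: "'a topology \<Rightarrow> 'a set set \<Rightarrow> bool" where
  "discrete_family X \<A> \<longleftrightarrow>
     (\<forall>x\<in>topspace X. \<exists>U. openin X U \<and> x \<in> U \<and>
        (\<forall>A\<in>\<A>. \<forall>B\<in>\<A>. A \<inter> U \<noteq> {} \<and> B \<inter> U \<noteq> {} \<longrightarrow> A = B))"

definition DCCC :: "'a topology \<Rightarrow> bool" where
  "DCCC X \<longleftrightarrow>
     (\<forall>\<A>. (\<forall>A\<in>\<A>. openin X A) \<and> discrete_family X \<A> \<longrightarrow> countable \<A>)"

definition open_cover :: "'a topology \<Rightarrow> 'a set set \<Rightarrow> bool" where
  "open_cover X \<U> \<longleftrightarrow> (\<forall>U\<in>\<U>. openin X U) \<and> \<Union>\<U> = topspace X"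

definition pairwise_disjoint_open_family :: "'a topology \<Rightarrow> 'a set set \<Rightarrow> bool" where
  "pairwise_disjoint_open_family X \<A> \<longleftrightarrow> (\<forall>A\<in>\<A>. openin X A) \<and> pairwise disjnt \<A>"

definition maximal_disjoint_open_family :: "'a topology \<Rightarrow> 'a set set \<Rightarrow> bool" where
  "maximal_disjoint_open_family X \<A> \<longleftrightarrow>
     pairwise_disjoint_open_family X \<A> \<and>
     (\<forall>\<B>. pairwise_disjoint_open_family X \<B> \<and> \<A> \<subseteq> \<B> \<longrightarrow> \<B> = \<A>)"

primrec star :: "nat \<Rightarrow> 'a set \<Rightarrow> 'a set set \<Rightarrow> 'a set" where
  "star 0 B \<U> = B"
| "star (Suc n) B \<U> = \<Union>{U\<in>\<U>. U \<inter> star n B \<U> \<noteq> {}}"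

definition selectively_n_star_ccc :: "nat \<Rightarrow> 'a topology \<Rightarrow> bool" where
  "selectively_n_star_ccc k X \<longleftrightarrow>
     (\<forall>\<U> \<A>s. open_cover X \<U> \<and> (\<forall>n::nat. maximal_disjoint_open_family X (\<A>s n)) \<longrightarrow>
        (\<exists>A. (\<forall>n. A n \<in> \<A>s n) \<and> star k (\<Union>n. A n) \<U> = topspace X))"

end

theory Submission
  imports Defs
begin

lemma star_step:
  assumes "Y \<in> \<U>" "Y \<inter> star k B \<U> \<noteq> {}"
  shows "Y \<subseteq> star (Suc k) B \<U>"
  using assms by auto

lemma star_sub: "star (Suc k) B \<U> \<subseteq> \<Union>\<U>"
  by auto

lemma star_step_eq:
  assumes "Y \<in> \<U>" "Y \<inter> star k B \<U> \<noteq> {}" "m = Suc k"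
  shows "Y \<subseteq> star m B \<U>"
  using star_step[OF assms(1,2)] assms(3) by simp

lemma s01: "Y \<in> \<U> \<Longrightarrow> Y \<inter> star 0 B \<U> \<noteq> {} \<Longrightarrow> Y \<subseteq> star 1 B \<U>"
  by (rule star_step_eq) simp_all
lemma s12: "Y \<in> \<U> \<Longrightarrow> Y \<inter> star 1 B \<U> \<noteq> {} \<Longrightarrow> Y \<subseteq> star 2 B \<U>"
  by (rule star_step_eq) simp_all
lemma s23: "Y \<in> \<U> \<Longrightarrow> Y \<inter> star 2 B \<U> \<noteq> {} \<Longrightarrow> Y \<subseteq> star 3 B \<U>"
  by (rule star_step_eq) simp_all
lemma star3_sub: "star 3 B \<U> \<subseteq> \<Union>\<U>"
proof -
  have "(3::nat) = Suc 2" by simp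
  thus ?thesis using star_sub[of 2 B \<U>] by (simp only:)
qed

lemma maximal_meets:
  assumes M: "maximal_disjoint_open_family X M" and V: "openin X V" "V \<noteq> {}"
  shows "\<exists>A\<in>M. A \<inter> V \<noteq> {}"
proof (rule ccontr)
  assume "\<not> ?thesis"
  hence d: "\<forall>A\<in>M. A \<inter> V = {}" by blast
  have "pairwise_disjoint_open_family X (insert V M)"
    using M V d unfolding maximal_disjoint_open_family_def pairwise_disjoint_open_family_def
    by (auto simp: pairwise_insert disjnt_def)
  hence "insert V M = M" using M unfolding maximal_disjoint_open_family_def by blast
  hence "V \<in> M" by blast
  with d V show False by blast
qed

theorem corollary5:
  fixes X :: "'a topology"
  assumes "DCCC X"
  shows "selectively_n_star_ccc 3 X"
  unfolding selectively_n_star_ccc_def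
proof (intro allI impI, elim conjE)
  fix \<U> :: "'a set set" and As :: "nat \<Rightarrow> 'a set set"
  assume cov: "open_cover X \<U>" and mx: "\<forall>n. maximal_disjoint_open_family X (As n)"
  define P where "P = (\<lambda>F. \<forall>W\<in>\<U>. \<forall>V1\<in>F. \<forall>V2\<in>F. W \<inter> V1 \<noteq> {} \<and> W \<inter> V2 \<noteq> {} \<longrightarrow> V1 = V2)"
  define Z where "Z = {F. F \<subseteq> {V\<in>\<U>. V \<noteq> {}} \<and> P F}"
  have "\<forall>C\<in>chains Z. \<Union>C \<in> Z"
  proof
    fix C assume C: "C \<in> chains Z"
    have "\<Union>C \<subseteq> {V\<in>\<U>. V \<noteq> {}}" using C unfolding chains_def Z_def by blast
    moreover have "P (\<Union>C)"
      unfolding P_def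
    proof (intro ballI impI)
      fix W V1 V2 assume W: "W \<in> \<U>" and v1: "V1 \<in> \<Union>C" and v2: "V2 \<in> \<Union>C"
        and m: "W \<inter> V1 \<noteq> {} \<and> W \<inter> V2 \<noteq> {}"
      from v1 obtain F1 where F1: "F1 \<in> C" "V1 \<in> F1" by (rule UnionE)
      from v2 obtain F2 where F2: "F2 \<in> C" "V2 \<in> F2" by (rule UnionE)
      have disj: "F1 \<subseteq> F2 \<or> F2 \<subseteq> F1" using C F1(1) F2(1) unfolding chains_def chain_subset_def by blast
      define G where "G = (if F1 \<subseteq> F2 then F2 else F1)"
      have "G \<in> C" using F1 F2 by (simp add: G_def)
      moreover have "V1 \<in> G" "V2 \<in> G" using disj F1 F2 by (auto simp: G_def)
      ultimately have "G \<in> C" "V1 \<in> G" "V2 \<in> G" by auto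
      hence "P G" using C unfolding chains_def Z_def by blast
      thus "V1 = V2" using W m \<open>V1 \<in> G\<close> \<open>V2 \<in> G\<close> unfolding P_def by blast
    qed
    ultimately show "\<Union>C \<in> Z" unfolding Z_def by blast
  qed
  then obtain F where FZ: "F \<in> Z" and Fmax: "\<forall>G\<in>Z. F \<subseteq> G \<longrightarrow> G = F"
    using Zorn_Lemma[of Z] by blast
  have FU: "F \<subseteq> \<U>" and Fne: "\<forall>V\<in>F. V \<noteq> {}" and PF: "P F" using FZ unfolding Z_def by auto
  have opU: "\<forall>U\<in>\<U>. openin X U" and unU: "\<Union>\<U> = topspace X" using cov unfolding open_cover_def by auto
  have "discrete_family X F"
    unfolding discrete_family_def
  proof
    fix x assume "x \<in> topspace X"
    then obtain W where "W \<in> \<U>" "x \<in> W" using unU by (metis UnionE)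
    moreover have "\<forall>A\<in>F. \<forall>B\<in>F. A \<inter> W \<noteq> {} \<and> B \<inter> W \<noteq> {} \<longrightarrow> A = B"
      using PF \<open>W \<in> \<U>\<close> unfolding P_def by (simp add: Int_commute)
    ultimately show "\<exists>U. openin X U \<and> x \<in> U \<and> (\<forall>A\<in>F. \<forall>B\<in>F. A \<inter> U \<noteq> {} \<and> B \<inter> U \<noteq> {} \<longrightarrow> A = B)"
      using opU by blast
  qed
  hence cF: "countable F" using assms FU opU unfolding DCCC_def by blast
  have key: "\<exists>V'\<in>F. (V = V') \<or> (\<exists>W\<in>\<U>. W \<inter> V \<noteq> {} \<and> W \<inter> V' \<noteq> {})"
    if V: "V \<in> \<U>" "V \<noteq> {}" for V
  proof (cases "V \<in> F")
    case True thus ?thesis by blast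
  next
    case False
    have "insert V F \<notin> Z" using Fmax False by blast
    hence "\<not> P (insert V F)" using FZ V unfolding Z_def by auto
    then obtain W V1 V2 where W: "W \<in> \<U>" "V1 \<in> insert V F" "V2 \<in> insert V F"
      "W \<inter> V1 \<noteq> {}" "W \<inter> V2 \<noteq> {}" "V1 \<noteq> V2" unfolding P_def by blast
    show ?thesis
    proof (cases "V1 = V")
      case True
      hence "V2 \<in> F" using W by auto
      thus ?thesis using W True by blast
    next
      case False
      hence "V1 \<in> F" using W by auto
      have "V2 = V" using W PF \<open>V1 \<in> F\<close> unfolding P_def by blast
      thus ?thesis using W \<open>V1 \<in> F\<close> by blast
    qed
  qed
  show "\<exists>A. (\<forall>n. A n \<in> As n) \<and> star 3 (\<Union>n. A n) \<U> = topspace X"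
  proof (cases "topspace X = {}")
    case True
    have "\<forall>n. \<exists>A. A \<in> As n"
    proof
      fix n
      have "pairwise_disjoint_open_family X (insert {} (As n))"
        using mx unfolding maximal_disjoint_open_family_def pairwise_disjoint_open_family_def
        by (auto simp: pairwise_insert)
      hence "insert {} (As n) = As n" using mx unfolding maximal_disjoint_open_family_def by blast
      thus "\<exists>A. A \<in> As n" by blast
    qed
    from choice[OF this] obtain A where "\<forall>n. A n \<in> As n" by blast
    moreover have "star 3 (\<Union>n. A n) \<U> = topspace X"
      using star3_sub[of "\<Union>n. A n" \<U>] True unU by blast
    ultimately show ?thesis by blast
  next
    case False
    then obtain x0 where "x0 \<in> topspace X" by blast
    then obtain V0 where "V0 \<in> \<U>" "x0 \<in> V0" using unU by blast
    hence "F \<noteq> {}" using key[of V0] by blast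
    define f where "f = from_nat_into F"
    have fF: "f n \<in> F" for n using \<open>F \<noteq> {}\<close> unfolding f_def by (simp add: from_nat_into)
    have rf: "range f = F" using cF \<open>F \<noteq> {}\<close> unfolding f_def by (simp add: range_from_nat_into)
    have "\<forall>n. \<exists>A\<in>As n. A \<inter> f n \<noteq> {}"
    proof
      fix n
      have "openin X (f n)" "f n \<noteq> {}" using fF FU opU Fne by auto
      from maximal_meets[OF mx[rule_format, of n] this] show "\<exists>A\<in>As n. A \<inter> f n \<noteq> {}" .
    qed
    hence "\<forall>n. \<exists>A. A \<in> As n \<and> A \<inter> f n \<noteq> {}" by blast
    from choice[OF this] obtain A where A: "\<forall>n. A n \<in> As n \<and> A n \<inter> f n \<noteq> {}" by blast
    define B where "B = (\<Union>n. A n)"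
    have s1: "V' \<subseteq> star 1 B \<U>" if V'F: "V' \<in> F" for V'
    proof -
      obtain n where "V' = f n" using rf V'F by blast
      hence "V' \<inter> star 0 B \<U> \<noteq> {}" using A unfolding B_def by auto
      thus ?thesis using s01[of V' \<U> B] V'F FU by blast
    qed
    have "topspace X \<subseteq> star 3 B \<U>"
    proof
      fix x assume "x \<in> topspace X"
      then obtain V where V: "V \<in> \<U>" "x \<in> V" using unU by blast
      then obtain V' where V': "V' \<in> F" "V = V' \<or> (\<exists>W\<in>\<U>. W \<inter> V \<noteq> {} \<and> W \<inter> V' \<noteq> {})"
        using key[of V] by blast
      show "x \<in> star 3 B \<U>"
      proof (cases "V = V'")
        case True
        have a: "V \<subseteq> star 1 B \<U>" using s1 V' True by blast
        hence "V \<subseteq> star 2 B \<U>" using s12[of V \<U> B] V by blast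
        hence "V \<subseteq> star 3 B \<U>" using s23[of V \<U> B] V by blast
        thus ?thesis using V by blast
      next
        case False
        then obtain W where W: "W \<in> \<U>" "W \<inter> V \<noteq> {}" "W \<inter> V' \<noteq> {}" using V' by blast
        have "W \<inter> star 1 B \<U> \<noteq> {}" using s1 V' W by blast
        hence "W \<subseteq> star 2 B \<U>" using s12[of W \<U> B] W by blast
        hence "V \<inter> star 2 B \<U> \<noteq> {}" using W by blast
        hence "V \<subseteq> star 3 B \<U>" using s23[of V \<U> B] V by blast
        thus ?thesis using V by blast
      qed
    qed
    moreover have "star 3 B \<U> \<subseteq> topspace X"
      using star3_sub[of B \<U>] unU by blast
    ultimately show ?thesis using A unfolding B_def by blast
  qed
qed

end
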